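(* Let $G$ be a finite graph, let $\lambda>0$, $\beta \in [0,\infty]$ and set $p=1-e^{-\beta}$. Then for every integer $k\ge1$, \[ Z_k({G,\lambda,\beta}) = \mathbb{E}\, Z({G_p,\lambda})^k .\]
   Context: For a finite graph $G=(V,E)$ and $I\subset V$, $E(I):=\{e\in E: e\subset I\}$. For $\lambda>0$, $\beta\in[0,\infty]$ and $k\ge1$, \[ Z_k(G,\lambda,\beta) := \sum_{I_1,\dots,I_k \subset V} \lambda^{|I_1|+\cdots+|I_k|} e^{-\beta |E(I_1) \cup \cdots \cup E(I_k)|}, \] with the convention $e^{-\infty\cdot 0}=1$ and $e^{-\infty\cdot n}=0$ for $n\ge1$. $G_p$ is the random spanning subgraph of $G$ keeping each edge independently with probability $p$, and $Z(H,\lambda):=\sum_I\lambda^{|I|}$ over independent sets $I$ of $H$ (including the empty set). *)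

theory Defs
  imports "HOL-Analysis.Analysis"
begin

definition graph :: "'a set \<Rightarrow> 'a set set \<Rightarrow> bool" where
  "graph V E \<longleftrightarrow> finite V \<and> (\<forall>e\<in>E. e \<subseteq> V \<and> card e = 2)"

definition induced_edges :: "'a set set \<Rightarrow> 'a set \<Rightarrow> 'a set set" where
  "induced_edges E I = {e \<in> E. e \<subseteq> I}"

definition exp_neg :: "ereal \<Rightarrow> real" where
  "exp_neg x = (if x = \<infinity> then 0 else exp (- real_of_ereal x))"

text \<open>Z_k(G,\<lambda>,\<beta>); the k-tuples (I_1,...,I_k) are functions on {..<k}.
  The factor e^{-\<beta> n} is exp_neg (\<beta> * n); in ereal, \<infinity> * 0 = 0.\<close>
definition Zk :: "'a set \<Rightarrow> 'a set set \<Rightarrow> real \<Rightarrow> ereal \<Rightarrow> nat \<Rightarrow> real" where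
  "Zk V E lam \<beta> k =
     (\<Sum>I\<in>Pi\<^sub>E {..<k} (\<lambda>_. Pow V).
        lam ^ (\<Sum>j<k. card (I j)) *
        exp_neg (\<beta> * ereal (real (card (\<Union>j<k. induced_edges E (I j))))))"

definition indep_set :: "'a set \<Rightarrow> 'a set set \<Rightarrow> 'a set \<Rightarrow> bool" where
  "indep_set V F I \<longleftrightarrow> I \<subseteq> V \<and> (\<forall>e\<in>F. \<not> e \<subseteq> I)"

definition Zind :: "'a set \<Rightarrow> 'a set set \<Rightarrow> real \<Rightarrow> real" where
  "Zind V F lam = (\<Sum>I\<in>{I. indep_set V F I}. lam ^ card I)"

text \<open>Expectation of f(G_p), G_p keeping each edge independently with prob. p:
  P(G_p has edge set F) = p^|F| (1-p)^(|E|-|F|) for F \<subseteq> E.\<close>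
definition expect_Gp :: "'a set set \<Rightarrow> real \<Rightarrow> ('a set set \<Rightarrow> real) \<Rightarrow> real" where
  "expect_Gp E p f = (\<Sum>F\<in>Pow E. p ^ card F * (1 - p) ^ card (E - F) * f F)"

end

theory Submission
  imports Defs
begin

lemma binom_pow:
  fixes p q :: real
  assumes "finite A"
  shows "(\<Sum>F\<in>Pow A. p ^ card F * q ^ card (A - F)) = (p + q) ^ card A"
proof -
  have "(\<Prod>x\<in>A. p + q) = (\<Sum>X\<in>Pow A. (\<Prod>x\<in>X. p) * (\<Prod>x\<in>A-X. q))"
    by (rule prod_add[OF assms])
  thus ?thesis by simp
qed

lemma exp_neg_mult:
  assumes "\<beta> \<ge> 0"
  shows "exp_neg (\<beta> * ereal (real n)) = exp_neg \<beta> ^ n"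
proof (cases "\<beta> = \<infinity>")
  case True
  show ?thesis
  proof (cases "n = 0")
    case True
    then show ?thesis using \<open>\<beta> = \<infinity>\<close> by (simp add: exp_neg_def zero_ereal_def[symmetric])
  next
    case False
    then have "\<beta> * ereal (real n) = \<infinity>" using \<open>\<beta> = \<infinity>\<close> by simp
    then show ?thesis using \<open>\<beta> = \<infinity>\<close> False by (simp add: exp_neg_def)
  qed
next
  case False
  then obtain r where r: "\<beta> = ereal r" using assms by (cases \<beta>) auto
  then show ?thesis by (simp add: exp_neg_def exp_of_nat_mult[symmetric] mult.commute)
qed

theorem proposition1p7:
  fixes V :: "'a set" and E :: "'a set set" and lam :: real and \<beta> :: ereal and k :: nat
  assumes "graph V E" and "lam > 0" and "\<beta> \<ge> 0" and "k \<ge> 1"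
  shows "Zk V E lam \<beta> k = expect_Gp E (1 - exp_neg \<beta>) (\<lambda>F. Zind V F lam ^ k)"
proof -
  define q where "q = exp_neg \<beta>"
  define p where "p = 1 - q"
  define K where "K = Pi\<^sub>E {..<k} (\<lambda>_. Pow V)"
  define U where "U = (\<lambda>I::nat \<Rightarrow> 'a set. \<Union>j<k. induced_edges E (I j))"
  define g where "g = (\<lambda>I::nat \<Rightarrow> 'a set. lam ^ (\<Sum>j<k. card (I j)))"
  have finV: "finite V" using assms(1) by (simp add: graph_def)
  have EV: "E \<subseteq> Pow V" using assms(1) by (auto simp: graph_def)
  have finE: "finite E" using finV EV finite_subset by blast
  have finK: "finite K" unfolding K_def using finV by (simp add: finite_PiE)
  have UE: "U I \<subseteq> E" for I unfolding U_def induced_edges_def by auto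
  have Zpow: "Zind V F lam ^ k = (\<Sum>I\<in>K. if F \<inter> U I = {} then g I else 0)"
    if F: "F \<subseteq> E" for F
  proof -
    have fin: "finite {I. indep_set V F I}"
      by (rule finite_subset[of _ "Pow V"]) (auto simp: indep_set_def finV)
    have "Zind V F lam ^ k = (\<Prod>j<k. \<Sum>I\<in>{I. indep_set V F I}. lam ^ card I)"
      by (simp add: Zind_def)
    also have "\<dots> = (\<Sum>I\<in>Pi\<^sub>E {..<k} (\<lambda>_. {I. indep_set V F I}). \<Prod>j<k. lam ^ card (I j))"
      by (rule prod_sum_PiE) (use fin in auto)
    also have "\<dots> = (\<Sum>I\<in>Pi\<^sub>E {..<k} (\<lambda>_. {I. indep_set V F I}). g I)"
      by (simp add: g_def power_sum)
    also have "Pi\<^sub>E {..<k} (\<lambda>_. {I. indep_set V F I}) = {I\<in>K. F \<inter> U I = {}}"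
      using F unfolding K_def U_def induced_edges_def indep_set_def PiE_def Pi_def
      by blast
    also have "(\<Sum>I\<in>{I\<in>K. F \<inter> U I = {}}. g I) = (\<Sum>I\<in>K. if F \<inter> U I = {} then g I else 0)"
      using finK by (simp add: sum.inter_filter)
    finally show ?thesis .
  qed
  have inner: "(\<Sum>F\<in>Pow E. p ^ card F * q ^ card (E - F) * (if F \<inter> U I = {} then 1 else 0))
      = q ^ card (U I)" for I
  proof -
    have fU: "finite (U I)" using UE finE finite_subset by blast
    have "(\<Sum>F\<in>Pow E. p ^ card F * q ^ card (E - F) * (if F \<inter> U I = {} then 1 else 0))
       = (\<Sum>F\<in>{F\<in>Pow E. F \<inter> U I = {}}. p ^ card F * q ^ card (E - F))"
      using finE by (simp add: sum.inter_filter[symmetric] if_distrib cong: if_cong)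
    also have "{F\<in>Pow E. F \<inter> U I = {}} = Pow (E - U I)" by auto
    also have "(\<Sum>F\<in>Pow (E - U I). p ^ card F * q ^ card (E - F))
        = (\<Sum>F\<in>Pow (E - U I). q ^ card (U I) * (p ^ card F * q ^ card ((E - U I) - F)))"
    proof (rule sum.cong[OF refl])
      fix F assume "F \<in> Pow (E - U I)"
      then have "E - F = U I \<union> ((E - U I) - F)" "U I \<inter> ((E - U I) - F) = {}"
        using UE[of I] by auto
      then have "card (E - F) = card (U I) + card ((E - U I) - F)"
        using fU finE by (simp add: card_Un_disjoint)
      then show "p ^ card F * q ^ card (E - F) = q ^ card (U I) * (p ^ card F * q ^ card ((E - U I) - F))"
        by (simp add: power_add)
    qed
    also have "\<dots> = q ^ card (U I) * (p + q) ^ card (E - U I)"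
      by (simp add: sum_distrib_left[symmetric] binom_pow finE)
    also have "\<dots> = q ^ card (U I)" by (simp add: p_def)
    finally show ?thesis .
  qed
  have "expect_Gp E (1 - exp_neg \<beta>) (\<lambda>F. Zind V F lam ^ k)
      = (\<Sum>F\<in>Pow E. p ^ card F * q ^ card (E - F) * (\<Sum>I\<in>K. if F \<inter> U I = {} then g I else 0))"
    unfolding expect_Gp_def p_def q_def by (rule sum.cong[OF refl]) (simp add: Zpow[unfolded p_def q_def])
  also have "\<dots> = (\<Sum>F\<in>Pow E. \<Sum>I\<in>K. g I * (p ^ card F * q ^ card (E - F) * (if F \<inter> U I = {} then 1 else 0)))"
    by (simp add: sum_distrib_left mult_ac if_distrib cong: if_cong)
  also have "\<dots> = (\<Sum>I\<in>K. \<Sum>F\<in>Pow E. g I * (p ^ card F * q ^ card (E - F) * (if F \<inter> U I = {} then 1 else 0)))"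
    by (rule sum.swap)
  also have "\<dots> = (\<Sum>I\<in>K. g I * q ^ card (U I))"
    by (simp add: sum_distrib_left[symmetric] inner)
  also have "\<dots> = Zk V E lam \<beta> k"
    unfolding Zk_def K_def g_def U_def q_def
    by (rule sum.cong[OF refl]) (simp add: exp_neg_mult[OF assms(3)])
  finally show ?thesis by simp
qed

end
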